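(* Let $k$ be a positive integer, let $G$ be a multigraph, and let $A,B$ be nonempty sets of vertices such that $A$ is contained in one equivalence class of $\sim_k$ and $B$ is contained in a different equivalence class of $\sim_k$. Then there is a set $X$ of at most $k-1$ edges of $G$ such that $G-X$ contains no $A$--$B$-path (i.e., $X$ separates $A$ and $B$).
   Context: For vertices $u,v$ of a multigraph $G$, $u\sim_k v$ means that either $u=v$ or there are $k$ pairwise edge-disjoint $u$--$v$-paths in $G$; this is an equivalence relation on $V(G)$. $G-X$ denotes $G$ with the edges of $X$ deleted. *)

theory Defs
  imports Main
begin

text \<open>Parallel edges are distinct elements of E.\<close>

definition multigraph :: "'v set \<Rightarrow> 'e set \<Rightarrow> ('e \<Rightarrow> 'v \<times> 'v) \<Rightarrow> bool" where
  "multigraph V E ends \<longleftrightarrow> finite V \<and> finite E \<and>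
     (\<forall>e\<in>E. fst (ends e) \<in> V \<and> snd (ends e) \<in> V)"

definition joins :: "('e \<Rightarrow> 'v \<times> 'v) \<Rightarrow> 'e \<Rightarrow> 'v \<Rightarrow> 'v \<Rightarrow> bool" where
  "joins ends e x y \<longleftrightarrow> ends e = (x, y) \<or> ends e = (y, x)"

definition is_path :: "'v set \<Rightarrow> 'e set \<Rightarrow> ('e \<Rightarrow> 'v \<times> 'v) \<Rightarrow> 'v list \<Rightarrow> 'e list \<Rightarrow> bool" where
  "is_path V E ends vs es \<longleftrightarrow> vs \<noteq> [] \<and> set vs \<subseteq> V \<and> distinct vs \<and> set es \<subseteq> E \<and>
     length es + 1 = length vs \<and>
     (\<forall>i < length es. joins ends (es ! i) (vs ! i) (vs ! Suc i))"

definition is_uv_path :: "'v set \<Rightarrow> 'e set \<Rightarrow> ('e \<Rightarrow> 'v \<times> 'v) \<Rightarrow> 'v \<Rightarrow> 'v \<Rightarrow> 'v list \<Rightarrow> 'e list \<Rightarrow> bool" where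
  "is_uv_path V E ends u v vs es \<longleftrightarrow> is_path V E ends vs es \<and> hd vs = u \<and> last vs = v"

definition k_equiv :: "'v set \<Rightarrow> 'e set \<Rightarrow> ('e \<Rightarrow> 'v \<times> 'v) \<Rightarrow> nat \<Rightarrow> 'v \<Rightarrow> 'v \<Rightarrow> bool" where
  "k_equiv V E ends k u v \<longleftrightarrow> u = v \<or>
     (\<exists>P :: nat \<Rightarrow> 'v list \<times> 'e list.
        (\<forall>i<k. is_uv_path V E ends u v (fst (P i)) (snd (P i))) \<and>
        (\<forall>i<k. \<forall>j<k. i \<noteq> j \<longrightarrow> set (snd (P i)) \<inter> set (snd (P j)) = {}))"

definition has_AB_path :: "'v set \<Rightarrow> 'e set \<Rightarrow> ('e \<Rightarrow> 'v \<times> 'v) \<Rightarrow> 'v set \<Rightarrow> 'v set \<Rightarrow> bool" where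
  "has_AB_path V E ends A B \<longleftrightarrow>
     (\<exists>a\<in>A. \<exists>b\<in>B. \<exists>vs es. is_uv_path V E ends a b vs es)"

end

theory Submission
  imports Defs "HOL-Library.Transitive_Closure_Table"
begin

locale mg =
  fixes V :: "'v set" and E :: "'e set" and ends :: "'e \<Rightarrow> 'v \<times> 'v"
  assumes mgr: "multigraph V E ends"
begin

definition atl :: "'e \<times> bool \<Rightarrow> 'v" where
  "atl d = (if snd d then fst (ends (fst d)) else snd (ends (fst d)))"
definition ahd :: "'e \<times> bool \<Rightarrow> 'v" where
  "ahd d = (if snd d then snd (ends (fst d)) else fst (ends (fst d)))"
definition arev :: "'e \<times> bool \<Rightarrow> 'e \<times> bool" where
  "arev d = (fst d, \<not> snd d)"

lemma atl_arev[simp]: "atl (arev d) = ahd d" and ahd_arev[simp]: "ahd (arev d) = atl d"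
  and arev_arev[simp]: "arev (arev d) = d"
  by (auto simp: atl_def ahd_def arev_def)

lemma inj_arev: "inj arev"
  by (metis arev_arev injI)

lemma same_edge: "fst d = fst d' \<Longrightarrow> {atl d, ahd d} = {atl d', ahd d'}"
  by (cases d; cases d') (auto simp: atl_def ahd_def)

lemma arc_in_V: "fst d \<in> E \<Longrightarrow> atl d \<in> V \<and> ahd d \<in> V"
  using mgr by (auto simp: multigraph_def atl_def ahd_def)

definition net :: "('e \<times> bool) set \<Rightarrow> 'v \<Rightarrow> int" where
  "net F v = (\<Sum>d\<in>F. of_bool (atl d = v) - of_bool (ahd d = v))"

inductive dwalk :: "('e \<times> bool) set \<Rightarrow> 'v \<Rightarrow> ('e \<times> bool) list \<Rightarrow> 'v \<Rightarrow> bool" for S where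
  dw_nil: "dwalk S x [] x"
| dw_cons: "d \<in> S \<Longrightarrow> atl d = x \<Longrightarrow> dwalk S (ahd d) ds y \<Longrightarrow> dwalk S x (d # ds) y"

lemma dwalk_tele: "dwalk S x ds y \<Longrightarrow>
  sum_list (map (\<lambda>d. of_bool (atl d = v) - of_bool (ahd d = v)) ds) = (of_bool (x = v) - of_bool (y = v) :: int)"
  by (induction rule: dwalk.induct) auto

lemma dwalk_set: "dwalk S x ds y \<Longrightarrow> set ds \<subseteq> S"
  by (induction rule: dwalk.induct) auto

lemma dwalk_verts: "dwalk S x ds y \<Longrightarrow> d \<in> set ds \<Longrightarrow>
   atl d \<in> set (x # map ahd ds) \<and> ahd d \<in> set (x # map ahd ds)"
  by (induction rule: dwalk.induct) auto

lemma dwalk_last: "dwalk S x ds y \<Longrightarrow> last (x # map ahd ds) = y"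
  by (induction rule: dwalk.induct) auto

lemma dwalk_distinct_edges: "dwalk S x ds y \<Longrightarrow> distinct (x # map ahd ds) \<Longrightarrow> distinct (map fst ds)"
proof (induction rule: dwalk.induct)
  case (dw_nil x)
  then show ?case by simp
next
  case (dw_cons d x ds y)
  have "fst d \<notin> fst ` set ds"
  proof
    assume "fst d \<in> fst ` set ds"
    then obtain d' where d': "d' \<in> set ds" "fst d' = fst d" by auto
    have "x \<in> {atl d', ahd d'}" using same_edge[OF d'(2)] dw_cons(2) by blast
    then have "x \<in> set (ahd d # map ahd ds)" using dwalk_verts[OF dw_cons(3) d'(1)] by blast
    with dw_cons(5) show False by simp
  qed
  with dw_cons show ?case by simp
qed

lemma dwalk_distinct: "dwalk S x ds y \<Longrightarrow> distinct (x # map ahd ds) \<Longrightarrow> distinct ds"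
  using dwalk_distinct_edges distinct_map by blast

definition rel :: "('e \<times> bool) set \<Rightarrow> 'v \<Rightarrow> 'v \<Rightarrow> bool" where
  "rel S u w = (\<exists>d\<in>S. atl d = u \<and> ahd d = w)"

lemma rpath_dwalk: "rtrancl_path (rel S) x xs y \<Longrightarrow> \<exists>ds. dwalk S x ds y \<and> map ahd ds = xs"
proof (induction rule: rtrancl_path.induct)
  case (base x)
  then show ?case using dw_nil by fastforce
next
  case (step x y ys z)
  then obtain ds where "dwalk S y ds z" "map ahd ds = ys" by blast
  moreover from step(1) obtain d where "d \<in> S" "atl d = x" "ahd d = y" by (auto simp: rel_def)
  ultimately show ?case using dw_cons[of d S x ds z] by (intro exI[of _ "d # ds"]) auto
qed

lemma reach_dwalk: "(rel S)\<^sup>*\<^sup>* x y \<Longrightarrow> \<exists>ds. dwalk S x ds y \<and> distinct (x # map ahd ds)"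
proof -
  assume "(rel S)\<^sup>*\<^sup>* x y"
  then obtain xs where "rtrancl_path (rel S) x xs y" by (auto simp: rtranclp_eq_rtrancl_path)
  then obtain xs' where "rtrancl_path (rel S) x xs' y" "distinct (x # xs')"
    by (rule rtrancl_path_distinct)
  then show ?thesis using rpath_dwalk by fastforce
qed

definition gv :: "'v \<Rightarrow> 'e \<times> bool \<Rightarrow> int" where
  "gv v d = of_bool (atl d = v) - of_bool (ahd d = v)"

lemma gv_arev[simp]: "gv v (arev d) = - gv v d"
  by (simp add: gv_def)

lemma net_gv: "net F v = sum (gv v) F"
  by (simp add: net_def gv_def)

lemma finE: "finite E" and finV: "finite V"
  using mgr by (auto simp: multigraph_def)

lemma fin_arcs: "(F :: ('e \<times> bool) set) \<subseteq> E \<times> UNIV \<Longrightarrow> finite F"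
proof -
  assume "F \<subseteq> E \<times> UNIV"
  moreover have "finite (E \<times> (UNIV :: bool set))" using finE by simp
  ultimately show ?thesis by (rule finite_subset)
qed

lemma sum_ofb: "finite R \<Longrightarrow> (\<Sum>v\<in>R. (of_bool (c = v) :: int)) = of_bool (c \<in> R)"
proof -
  assume fin: "finite R"
  have "(\<Sum>v\<in>R. (of_bool (c = v) :: int)) = (\<Sum>v\<in>R. if c = v then 1 else 0)"
    by (rule sum.cong[OF refl]) (simp only: of_bool_def)
  also have "\<dots> = (if c \<in> R then 1 else 0)"
    using sum.delta'[OF fin, of c "\<lambda>_. (1::int)"] .
  also have "\<dots> = of_bool (c \<in> R)" by (simp only: of_bool_def)
  finally show ?thesis .
qed

lemma gvR: "finite R \<Longrightarrow> (\<Sum>v\<in>R. gv v d) = of_bool (atl d \<in> R) - of_bool (ahd d \<in> R)"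
  unfolding gv_def sum_subtractf by (simp only: sum_ofb)

lemma sum_net_R:
  assumes "finite R" "finite F"
  shows "(\<Sum>v\<in>R. net F v) = (\<Sum>d\<in>F. of_bool (atl d \<in> R) - of_bool (ahd d \<in> R))"
proof -
  have "(\<Sum>v\<in>R. net F v) = (\<Sum>v\<in>R. \<Sum>d\<in>F. gv v d)" by (simp only: net_gv)
  also have "\<dots> = (\<Sum>d\<in>F. \<Sum>v\<in>R. gv v d)" by (rule sum.swap)
  also have "\<dots> = (\<Sum>d\<in>F. of_bool (atl d \<in> R) - of_bool (ahd d \<in> R))"
    by (rule sum.cong[OF refl]) (rule gvR[OF assms(1)])
  finally show ?thesis .
qed

definition flow :: "'v \<Rightarrow> 'v \<Rightarrow> ('e \<times> bool) set \<Rightarrow> nat \<Rightarrow> bool" where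
  "flow a b F j \<longleftrightarrow> F \<subseteq> E \<times> UNIV \<and> (\<forall>d\<in>F. arev d \<notin> F) \<and>
     (\<forall>v. net F v = (if v = a then int j else if v = b then - int j else 0))"

lemma flow_R:
  assumes "flow a b F j" "finite R" "a \<in> R" "b \<notin> R"
  shows "(\<Sum>v\<in>R. net F v) = int j"
proof -
  have nf: "\<And>v. net F v = (if v = a then int j else if v = b then - int j else 0)"
    using assms(1) unfolding flow_def by blast
  have "(\<Sum>v\<in>R. net F v) = (\<Sum>v\<in>R. if v = a then int j else 0)"
  proof (rule sum.cong[OF refl])
    fix v assume "v \<in> R"
    then have "v \<noteq> b" using assms(4) by blast
    then show "net F v = (if v = a then int j else 0)" unfolding nf by simp
  qed
  also have "\<dots> = int j" using assms(2,3) by (simp only: sum.delta if_True)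
  finally show ?thesis .
qed

lemma reach_sub:
  assumes "S \<subseteq> E \<times> UNIV" "(rel S)\<^sup>*\<^sup>* a v"
  shows "v \<in> insert a V"
  using assms(2)
proof (induction rule: rtranclp_induct)
  case base then show ?case by simp
next
  case (step y z)
  then obtain d where "d \<in> S" "ahd d = z" by (auto simp: rel_def)
  then have "fst d \<in> E" using assms(1) by auto
  then have "ahd d \<in> V" using arc_in_V by blast
  then show ?case using \<open>ahd d = z\<close> by simp
qed

lemma reach_fin: "S \<subseteq> E \<times> UNIV \<Longrightarrow> finite {v. (rel S)\<^sup>*\<^sup>* a v}"
  using reach_sub finV by (metis finite_insert finite_subset mem_Collect_eq subsetI)

lemma reach_step: "(rel S)\<^sup>*\<^sup>* a x \<Longrightarrow> d \<in> S \<Longrightarrow> atl d = x \<Longrightarrow> (rel S)\<^sup>*\<^sup>* a (ahd d)"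
  by (metis (mono_tags, lifting) rel_def rtranclp.rtrancl_into_rtrancl)

lemma flow_path:
  assumes "flow a b F j" "j \<ge> 1"
  shows "(rel F)\<^sup>*\<^sup>* a b"
proof (rule ccontr)
  assume nb: "\<not> (rel F)\<^sup>*\<^sup>* a b"
  define R where "R = {v. (rel F)\<^sup>*\<^sup>* a v}"
  have FE: "F \<subseteq> E \<times> UNIV" using assms by (simp add: flow_def)
  have finR: "finite R" unfolding R_def using reach_fin[OF FE] .
  have "(\<Sum>v\<in>R. net F v) = int j"
    using flow_R[OF assms(1) finR] nb by (auto simp: R_def)
  moreover have "(\<Sum>v\<in>R. net F v) \<le> 0"
  proof -
    have "(\<Sum>v\<in>R. net F v) = (\<Sum>d\<in>F. of_bool (atl d \<in> R) - of_bool (ahd d \<in> R))"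
      using sum_net_R[OF finR fin_arcs[OF FE]] .
    also have "\<dots> \<le> 0"
    proof (rule sum_nonpos)
      fix d assume "d \<in> F"
      then have "atl d \<in> R \<Longrightarrow> ahd d \<in> R" using reach_step unfolding R_def by blast
      then show "of_bool (atl d \<in> R) - of_bool (ahd d \<in> R) \<le> (0::int)" by auto
    qed
    finally show ?thesis .
  qed
  ultimately show False using assms(2) by simp
qed

lemma sum_dwalk:
  assumes "dwalk S x ds y" "distinct (x # map ahd ds)"
  shows "sum (gv v) (set ds) = of_bool (x = v) - of_bool (y = v)"
proof -
  have "distinct ds" using dwalk_distinct assms by blast
  then have "sum (gv v) (set ds) = sum_list (map (gv v) ds)"
    by (simp add: sum_list_distinct_conv_sum_set)
  also have "\<dots> = of_bool (x = v) - of_bool (y = v)"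
  proof -
    have "gv v = (\<lambda>d. of_bool (atl d = v) - of_bool (ahd d = v))" by (rule ext) (simp add: gv_def)
    then show ?thesis using dwalk_tele[OF assms(1), of v] by simp
  qed
  finally show ?thesis .
qed

lemma flow_peel:
  assumes "flow a b F j" "j \<ge> 1" "a \<noteq> b" "dwalk F a ds b" "distinct (a # map ahd ds)"
  shows "flow a b (F - set ds) (j - 1)"
proof -
  have FE: "F \<subseteq> E \<times> UNIV" using assms by (simp add: flow_def)
  have sub: "set ds \<subseteq> F" using dwalk_set[OF assms(4)] .
  have n: "net (F - set ds) v = (if v = a then int (j - 1) else if v = b then - int (j - 1) else 0)" for v
  proof -
    have "net (F - set ds) v = net F v - sum (gv v) (set ds)"
      unfolding net_gv using sum_diff[OF fin_arcs[OF FE] sub] .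
    also have "\<dots> = net F v - (of_bool (a = v) - of_bool (b = v))"
      using sum_dwalk[OF assms(4,5)] by simp
    also have "\<dots> = (if v = a then int (j - 1) else if v = b then - int (j - 1) else 0)"
    proof -
      have nf: "net F v = (if v = a then int j else if v = b then - int j else 0)"
        using assms(1) unfolding flow_def by blast
      have ij: "int (j - 1) = int j - 1" using assms(2) by simp
      show ?thesis unfolding nf ij using assms(3) by auto
    qed
    finally show ?thesis .
  qed
  have s1: "F - set ds \<subseteq> E \<times> UNIV" using FE by blast
  have s2: "\<forall>d\<in>F - set ds. arev d \<notin> F - set ds"
    using assms(1) unfolding flow_def by blast
  show ?thesis unfolding flow_def by (rule conjI[OF s1 conjI[OF s2 allI[OF n]]])
qed


lemma arev_neq: "arev d \<noteq> d"
  by (cases d) (simp add: arev_def)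

lemma fst_eq: "fst d = fst d' \<Longrightarrow> d' = d \<or> d' = arev d"
  by (cases d; cases d') (auto simp: arev_def)

lemma flow_aug:
  assumes "flow a b F j" "a \<noteq> b" "dwalk (E \<times> UNIV - F) a ds b" "distinct (a # map ahd ds)"
  shows "flow a b ((F - arev ` set ds) \<union> {d \<in> set ds. arev d \<notin> F}) (Suc j)"
proof -
  define P where "P = set ds"
  define P1 where "P1 = {d\<in>P. arev d \<in> F}"
  define P2 where "P2 = {d\<in>P. arev d \<notin> F}"
  have FE: "F \<subseteq> E \<times> UNIV" and nb: "\<forall>d\<in>F. arev d \<notin> F"
    and nf: "\<And>v. net F v = (if v = a then int j else if v = b then - int j else 0)"
    using assms(1) unfolding flow_def by blast+
  have PR: "P \<subseteq> E \<times> UNIV - F" using dwalk_set[OF assms(3)] unfolding P_def .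
  have finF: "finite F" using fin_arcs[OF FE] .
  have finP: "finite P" unfolding P_def by simp
  have finP1: "finite P1" using finP unfolding P1_def by simp
  have finP2: "finite P2" using finP unfolding P2_def by simp
  have de: "distinct (map fst ds)" using dwalk_distinct_edges[OF assms(3,4)] .
  have inj: "d = d'" if "d \<in> P" "d' \<in> P" "fst d = fst d'" for d d'
    using de that unfolding P_def by (metis distinct_map inj_onD)
  have e1: "F - arev ` set ds = F - arev ` P1"
  proof
    show "F - arev ` set ds \<subseteq> F - arev ` P1" unfolding P1_def P_def by blast
    show "F - arev ` P1 \<subseteq> F - arev ` set ds"
    proof
      fix x assume x: "x \<in> F - arev ` P1"
      show "x \<in> F - arev ` set ds"
      proof
        show "x \<notin> arev ` set ds"
        proof
          assume "x \<in> arev ` set ds"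
          then obtain d where d: "d \<in> set ds" "x = arev d" by blast
          then have "d \<in> P1" using x unfolding P1_def P_def by simp
          then show False using x d by blast
        qed
      qed (use x in blast)
    qed
  qed
  define F' where "F' = (F - arev ` P1) \<union> P2"
  have F'eq: "(F - arev ` set ds) \<union> {d \<in> set ds. arev d \<notin> F} = F'"
    unfolding F'_def e1 P2_def P_def ..
  have s1: "F' \<subseteq> E \<times> UNIV" unfolding F'_def P2_def using FE PR by blast
  have s2: "\<forall>d\<in>F'. arev d \<notin> F'"
  proof
    fix d assume d: "d \<in> F'"
    show "arev d \<notin> F'"
    proof (cases "d \<in> P2")
      case True
      then have dP: "d \<in> P" "arev d \<notin> F" unfolding P2_def by auto
      show ?thesis
      proof
        assume "arev d \<in> F'"
        then have "arev d \<in> P2" using dP unfolding F'_def by blast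
        then have "arev d \<in> P" unfolding P2_def by blast
        then have "arev d = d" using inj[OF _ dP(1)] by (simp add: arev_def)
        then show False using arev_neq by blast
      qed
    next
      case False
      then have "d \<in> F" using d unfolding F'_def by blast
      then have "arev d \<notin> F" using nb by blast
      moreover have "arev d \<notin> P2" using \<open>d \<in> F\<close> unfolding P2_def by simp
      ultimately show ?thesis unfolding F'_def by blast
    qed
  qed
  have n: "net F' v = (if v = a then int (Suc j) else if v = b then - int (Suc j) else 0)" for v
  proof -
    have sub1: "arev ` P1 \<subseteq> F" unfolding P1_def by auto
    have disj: "(F - arev ` P1) \<inter> P2 = {}" using PR unfolding P2_def by blast
    have "net F' v = sum (gv v) (F - arev ` P1) + sum (gv v) P2"
      unfolding net_gv F'_def using finF finP2 disj by (simp add: sum.union_disjoint)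
    also have "sum (gv v) (F - arev ` P1) = sum (gv v) F - sum (gv v) (arev ` P1)"
      using sum_diff[OF finF sub1] .
    also have "sum (gv v) (arev ` P1) = sum (gv v \<circ> arev) P1"
      by (rule sum.reindex) (meson inj_arev inj_on_subset subset_UNIV)
    also have "\<dots> = - sum (gv v) P1" by (simp add: o_def sum_negf)
    also have "sum (gv v) P = sum (gv v) P1 + sum (gv v) P2"
    proof -
      have "P = P1 \<union> P2" "P1 \<inter> P2 = {}" unfolding P1_def P2_def by auto
      then show ?thesis using finP1 finP2 by (simp add: sum.union_disjoint)
    qed
    moreover have "sum (gv v) P = of_bool (a = v) - of_bool (b = v)"
      unfolding P_def using sum_dwalk[OF assms(3,4)] .
    ultimately have "net F' v = net F v + (of_bool (a = v) - of_bool (b = v))"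
      unfolding net_gv by linarith
    then show ?thesis unfolding nf using assms(2) by auto
  qed
  show ?thesis unfolding F'eq flow_def by (rule conjI[OF s1 conjI[OF s2 allI[OF n]]])
qed

definition uconn :: "'e set \<Rightarrow> 'v \<Rightarrow> 'v \<Rightarrow> bool" where
  "uconn E' x y = (\<exists>e\<in>E'. joins ends e x y)"

lemma flow_cut:
  assumes "flow a b F j" "a \<noteq> b" "\<not> (rel (E \<times> UNIV - F))\<^sup>*\<^sup>* a b"
  shows "\<exists>X \<subseteq> E. card X \<le> j \<and> \<not> (uconn (E - X))\<^sup>*\<^sup>* a b"
proof -
  define Res where "Res = E \<times> (UNIV::bool set) - F"
  define R where "R = {v. (rel Res)\<^sup>*\<^sup>* a v}"
  have FE: "F \<subseteq> E \<times> UNIV" and nb: "\<forall>d\<in>F. arev d \<notin> F"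
    using assms(1) unfolding flow_def by blast+
  have ResE: "Res \<subseteq> E \<times> UNIV" unfolding Res_def by blast
  have finR: "finite R" unfolding R_def using reach_fin[OF ResE] .
  have aR: "a \<in> R" unfolding R_def by simp
  have bR: "b \<notin> R" using assms(3) unfolding R_def Res_def by simp
  have clos: "ahd d \<in> R" if "d \<in> Res" "atl d \<in> R" for d
    using that reach_step unfolding R_def by blast
  define X where "X = {e\<in>E. (fst (ends e) \<in> R) \<noteq> (snd (ends e) \<in> R)}"
  have reachR: "w \<in> R" if "(uconn (E - X))\<^sup>*\<^sup>* a w" for w
    using that
  proof (induction rule: rtranclp_induct)
    case base then show ?case using aR .
  next
    case (step y z)
    then obtain e where e: "e \<in> E" "e \<notin> X" "joins ends e y z" unfolding uconn_def by blast
    then have same: "(fst (ends e) \<in> R) = (snd (ends e) \<in> R)" unfolding X_def by blast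
    from e(3) have "ends e = (y, z) \<or> ends e = (z, y)" unfolding joins_def .
    then show ?case using same step.IH by auto
  qed
  have sep: "\<not> (uconn (E - X))\<^sup>*\<^sup>* a b" using reachR bR by blast
  define L where "L = {d\<in>F. atl d \<in> R \<and> ahd d \<notin> R}"
  have noin: "atl d \<in> R" if "d \<in> F" "ahd d \<in> R" for d
  proof -
    have "arev d \<notin> F" using nb that(1) by blast
    moreover have "fst (arev d) \<in> E" using FE that(1) by (auto simp: arev_def)
    ultimately have "arev d \<in> Res" unfolding Res_def by (cases "arev d") auto
    then have "ahd (arev d) \<in> R" using clos[of "arev d"] that(2) by simp
    then show ?thesis by simp
  qed
  have XL: "X \<subseteq> fst ` L"
  proof
    fix e assume eX: "e \<in> X"
    define d0 where "d0 = (e, fst (ends e) \<in> R)"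
    have eE: "e \<in> E" using eX unfolding X_def by blast
    have t: "atl d0 \<in> R" and h: "ahd d0 \<notin> R"
      using eX unfolding X_def d0_def atl_def ahd_def by auto
    have "d0 \<in> F"
    proof (rule ccontr)
      assume "d0 \<notin> F"
      then have "d0 \<in> Res" using eE unfolding Res_def d0_def by simp
      then show False using clos t h by blast
    qed
    then have "d0 \<in> L" using t h unfolding L_def by blast
    then show "e \<in> fst ` L" unfolding d0_def by force
  qed
  have finF: "finite F" using fin_arcs[OF FE] .
  have LF: "L \<subseteq> F" unfolding L_def by blast
  have "int j = (\<Sum>v\<in>R. net F v)" using flow_R[OF assms(1) finR aR bR] by simp
  also have "\<dots> = (\<Sum>d\<in>F. of_bool (atl d \<in> R) - of_bool (ahd d \<in> R))"
    using sum_net_R[OF finR finF] .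
  also have "\<dots> = (\<Sum>d\<in>F. of_bool (d \<in> L))"
  proof (rule sum.cong[OF refl])
    fix d assume dF: "d \<in> F"
    show "(of_bool (atl d \<in> R) - of_bool (ahd d \<in> R) :: int) = of_bool (d \<in> L)"
    proof (cases "ahd d \<in> R")
      case True
      then have "atl d \<in> R" using noin dF by blast
      then show ?thesis using True unfolding L_def by simp
    next
      case False
      then show ?thesis using dF unfolding L_def by simp
    qed
  qed
  also have "\<dots> = int (card (F \<inter> {d. d \<in> L}))" using finF by simp
  also have "F \<inter> {d. d \<in> L} = L" using LF by blast
  finally have cL: "card L = j" by simp
  have finL: "finite L" using finF LF finite_subset by blast
  have "card X \<le> card (fst ` L)" using XL finL by (simp add: card_mono)
  also have "\<dots> \<le> card L" by (rule card_image_le[OF finL])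
  finally have "card X \<le> j" using cL by simp
  moreover have "X \<subseteq> E" unfolding X_def by blast
  ultimately show ?thesis using sep by blast
qed

lemma flow_or_cut:
  assumes "a \<noteq> b" "j \<le> k"
  shows "(\<exists>F. flow a b F j) \<or> (\<exists>X \<subseteq> E. card X \<le> k - 1 \<and> \<not> (uconn (E - X))\<^sup>*\<^sup>* a b)"
  using assms(2)
proof (induction j)
  case 0
  have "flow a b {} 0" unfolding flow_def by (simp add: net_def)
  then show ?case by blast
next
  case (Suc j)
  then have "j \<le> k" by simp
  from Suc.IH[OF this] show ?case
  proof
    assume "\<exists>F. flow a b F j"
    then obtain F where F: "flow a b F j" by blast
    show ?case
    proof (cases "(rel (E \<times> UNIV - F))\<^sup>*\<^sup>* a b")
      case True
      then obtain ds where "dwalk (E \<times> UNIV - F) a ds b" "distinct (a # map ahd ds)"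
        using reach_dwalk by blast
      then have "flow a b ((F - arev ` set ds) \<union> {d \<in> set ds. arev d \<notin> F}) (Suc j)"
        using flow_aug[OF F assms(1)] by blast
      then show ?thesis by blast
    next
      case False
      then obtain X where "X \<subseteq> E" "card X \<le> j" "\<not> (uconn (E - X))\<^sup>*\<^sup>* a b"
        using flow_cut[OF F assms(1)] by blast
      moreover have "j \<le> k - 1" using Suc.prems by simp
      ultimately show ?thesis by auto
    qed
  next
    assume "\<exists>X \<subseteq> E. card X \<le> k - 1 \<and> \<not> (uconn (E - X))\<^sup>*\<^sup>* a b"
    then show ?case by blast
  qed
qed

lemma dwalk_nth: "dwalk S x ds y \<Longrightarrow> i < length ds \<Longrightarrow> atl (ds ! i) = (x # map ahd ds) ! i"
proof (induction arbitrary: i rule: dwalk.induct)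
  case (dw_nil x) then show ?case by simp
next
  case (dw_cons d x ds y)
  then show ?case by (cases i) auto
qed

lemma joins_arc: "joins ends (fst d) (atl d) (ahd d)"
  by (cases "snd d") (auto simp: joins_def atl_def ahd_def)

lemma dwalk_uv:
  assumes "dwalk S x ds y" "S \<subseteq> E \<times> UNIV" "distinct (x # map ahd ds)" "x \<in> V"
  shows "is_uv_path V E ends x y (x # map ahd ds) (map fst ds)"
proof -
  have sds: "set ds \<subseteq> E \<times> UNIV" using dwalk_set[OF assms(1)] assms(2) by blast
  have "ahd d \<in> V" if "d \<in> set ds" for d
  proof -
    have "fst d \<in> E" using sds that by auto
    then show ?thesis using arc_in_V by blast
  qed
  then have sV: "set (x # map ahd ds) \<subseteq> V" using assms(4) by auto
  have sE: "set (map fst ds) \<subseteq> E" using sds by auto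
  have j: "joins ends (map fst ds ! i) ((x # map ahd ds) ! i) ((x # map ahd ds) ! Suc i)"
    if "i < length (map fst ds)" for i
  proof -
    have i: "i < length ds" using that by simp
    have "(x # map ahd ds) ! i = atl (ds ! i)" using dwalk_nth[OF assms(1) i] by simp
    moreover have "(x # map ahd ds) ! Suc i = ahd (ds ! i)" using i by simp
    moreover have "map fst ds ! i = fst (ds ! i)" using i by simp
    ultimately show ?thesis using joins_arc by simp
  qed
  show ?thesis unfolding is_uv_path_def is_path_def
    using sV sE j assms(3) dwalk_last[OF assms(1)] by simp
qed

lemma fst_disj:
  assumes "set ds \<subseteq> F" "\<forall>d\<in>F. arev d \<notin> F"
  shows "fst ` set ds \<inter> fst ` (F - set ds) = {}"
proof (rule ccontr)
  assume "\<not> ?thesis"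
  then obtain d d' where d: "d \<in> set ds" "d' \<in> F - set ds" "fst d = fst d'" by blast
  from fst_eq[OF d(3)] have "d' = d \<or> d' = arev d" .
  then show False using d assms by auto
qed

lemma flow_paths:
  assumes "a \<in> V" "a \<noteq> b"
  shows "flow a b F j \<Longrightarrow> \<exists>P :: nat \<Rightarrow> 'v list \<times> 'e list.
     (\<forall>i<j. is_uv_path V E ends a b (fst (P i)) (snd (P i)) \<and> set (snd (P i)) \<subseteq> fst ` F) \<and>
     (\<forall>i<j. \<forall>i'<j. i \<noteq> i' \<longrightarrow> set (snd (P i)) \<inter> set (snd (P i')) = {})"
proof (induction j arbitrary: F)
  case 0
  then show ?case by simp
next
  case (Suc j)
  have FE: "F \<subseteq> E \<times> UNIV" and nb: "\<forall>d\<in>F. arev d \<notin> F"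
    using Suc.prems unfolding flow_def by blast+
  have "(rel F)\<^sup>*\<^sup>* a b" using flow_path[OF Suc.prems] by simp
  then obtain ds where ds: "dwalk F a ds b" "distinct (a # map ahd ds)"
    using reach_dwalk by blast
  have "flow a b (F - set ds) (Suc j - 1)" using flow_peel[OF Suc.prems _ assms(2) ds] by simp
  then have "flow a b (F - set ds) j" by simp
  from Suc.IH[OF this] obtain P :: "nat \<Rightarrow> 'v list \<times> 'e list" where
    P1: "\<forall>i<j. is_uv_path V E ends a b (fst (P i)) (snd (P i)) \<and> set (snd (P i)) \<subseteq> fst ` (F - set ds)"
    and P2: "\<forall>i<j. \<forall>i'<j. i \<noteq> i' \<longrightarrow> set (snd (P i)) \<inter> set (snd (P i')) = {}"
    by blast
  define Q where "Q = P(j := (a # map ahd ds, map fst ds))"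
  have sds: "set ds \<subseteq> F" using dwalk_set[OF ds(1)] .
  have newp: "is_uv_path V E ends a b (a # map ahd ds) (map fst ds)"
    using dwalk_uv[OF ds(1) FE ds(2) assms(1)] .
  have dj: "fst ` set ds \<inter> fst ` (F - set ds) = {}" using fst_disj[OF sds nb] .
  have A: "\<forall>i<Suc j. is_uv_path V E ends a b (fst (Q i)) (snd (Q i)) \<and> set (snd (Q i)) \<subseteq> fst ` F"
  proof (intro allI impI)
    fix i assume "i < Suc j"
    then consider "i < j" | "i = j" by linarith
    then show "is_uv_path V E ends a b (fst (Q i)) (snd (Q i)) \<and> set (snd (Q i)) \<subseteq> fst ` F"
    proof cases
      case 1 then show ?thesis using P1 unfolding Q_def by auto
    next
      case 2 then show ?thesis using newp sds unfolding Q_def by auto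
    qed
  qed
  have B: "\<forall>i<Suc j. \<forall>i'<Suc j. i \<noteq> i' \<longrightarrow> set (snd (Q i)) \<inter> set (snd (Q i')) = {}"
  proof (intro allI impI)
    fix i i' assume i: "i < Suc j" and i': "i' < Suc j" and ne: "i \<noteq> i'"
    show "set (snd (Q i)) \<inter> set (snd (Q i')) = {}"
    proof (cases "i = j")
      case True
      then have "i' < j" using i' ne by simp
      then have "set (snd (Q i')) \<subseteq> fst ` (F - set ds)" using P1 unfolding Q_def by auto
      moreover have "set (snd (Q i)) = fst ` set ds" using True unfolding Q_def by simp
      ultimately show ?thesis using dj by blast
    next
      case False
      then have ij: "i < j" using i by simp
      show ?thesis
      proof (cases "i' = j")
        case True
        have "set (snd (Q i)) \<subseteq> fst ` (F - set ds)" using P1 ij False unfolding Q_def by auto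
        moreover have "set (snd (Q i')) = fst ` set ds" using True unfolding Q_def by simp
        ultimately show ?thesis using dj by blast
      next
        case False
        then have "i' < j" using i' by simp
        then show ?thesis using P2 ij ne \<open>i \<noteq> j\<close> False unfolding Q_def by auto
      qed
    qed
  qed
  show ?case using A B by blast
qed

lemma path_conn:
  assumes "is_uv_path V E' ends u v vs es"
  shows "(uconn E')\<^sup>*\<^sup>* u v"
proof -
  have p: "vs \<noteq> []" "length es + 1 = length vs" "set es \<subseteq> E'"
    "\<forall>i < length es. joins ends (es ! i) (vs ! i) (vs ! Suc i)"
    using assms unfolding is_uv_path_def is_path_def by blast+
  have "\<forall>i. i < length vs \<longrightarrow> (uconn E')\<^sup>*\<^sup>* (vs ! 0) (vs ! i)"
  proof
    fix i show "i < length vs \<longrightarrow> (uconn E')\<^sup>*\<^sup>* (vs ! 0) (vs ! i)"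
    proof (induction i)
      case 0 then show ?case by simp
    next
      case (Suc i)
      show ?case
      proof
        assume si: "Suc i < length vs"
        then have ie: "i < length es" using p(2) by simp
        then have "uconn E' (vs ! i) (vs ! Suc i)"
          using p(3,4) unfolding uconn_def by (meson nth_mem subsetD)
        moreover have "(uconn E')\<^sup>*\<^sup>* (vs ! 0) (vs ! i)" using Suc.IH si by simp
        ultimately show "(uconn E')\<^sup>*\<^sup>* (vs ! 0) (vs ! Suc i)" by simp
      qed
    qed
  qed
  moreover have "length vs - 1 < length vs" using p(1) by simp
  ultimately have "(uconn E')\<^sup>*\<^sup>* (vs ! 0) (vs ! (length vs - 1))" by blast
  moreover have "vs ! 0 = u" "vs ! (length vs - 1) = v"
    using assms p(1) unfolding is_uv_path_def by (simp_all add: hd_conv_nth last_conv_nth)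
  ultimately show ?thesis by simp
qed

lemma equiv_conn:
  assumes "k_equiv V E ends k u v" "k \<ge> 1" "X \<subseteq> E" "card X \<le> k - 1"
  shows "(uconn (E - X))\<^sup>*\<^sup>* u v"
proof (cases "u = v")
  case True then show ?thesis by simp
next
  case False
  then obtain P :: "nat \<Rightarrow> 'v list \<times> 'e list" where
    P1: "\<forall>i<k. is_uv_path V E ends u v (fst (P i)) (snd (P i))" and
    P2: "\<forall>i<k. \<forall>j<k. i \<noteq> j \<longrightarrow> set (snd (P i)) \<inter> set (snd (P j)) = {}"
    using assms(1) unfolding k_equiv_def by blast
  have "\<exists>i<k. set (snd (P i)) \<inter> X = {}"
  proof (rule ccontr)
    assume "\<not> ?thesis"
    then have "\<forall>i\<in>{..<k}. \<exists>e. e \<in> set (snd (P i)) \<inter> X" by blast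
    from bchoice[OF this] obtain f where f: "\<forall>i\<in>{..<k}. f i \<in> set (snd (P i)) \<inter> X" by blast
    have "inj_on f {..<k}"
    proof (rule inj_onI)
      fix i i' assume ii: "i \<in> {..<k}" "i' \<in> {..<k}" "f i = f i'"
      show "i = i'"
      proof (rule ccontr)
        assume ne: "i \<noteq> i'"
        have "set (snd (P i)) \<inter> set (snd (P i')) = {}" using P2 ii ne by simp
        moreover have "f i \<in> set (snd (P i))" using f ii(1) by blast
        moreover have "f i' \<in> set (snd (P i'))" using f ii(2) by blast
        then have "f i \<in> set (snd (P i'))" using ii(3) by simp
        ultimately show False by blast
      qed
    qed
    moreover have "f ` {..<k} \<subseteq> X" using f by blast
    moreover have "finite X" using assms(3) finE finite_subset by blast
    ultimately have "card {..<k} \<le> card X" by (rule card_inj_on_le)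
    then show False using assms(2,4) by simp
  qed
  then obtain i where i: "i < k" "set (snd (P i)) \<inter> X = {}" by blast
  have pi: "is_uv_path V E ends u v (fst (P i)) (snd (P i))" using P1 i(1) by simp
  have "set (snd (P i)) \<subseteq> E - X" using pi i(2) unfolding is_uv_path_def is_path_def by blast
  then have "is_uv_path V (E - X) ends u v (fst (P i)) (snd (P i))"
    using pi unfolding is_uv_path_def is_path_def by simp
  then show ?thesis by (rule path_conn)
qed

end

theorem lemma9:
  fixes V :: "'v set" and E :: "'e set" and ends :: "'e \<Rightarrow> 'v \<times> 'v"
    and k :: nat and A B :: "'v set"
  assumes "multigraph V E ends"
    and "k \<ge> 1"
    and "A \<subseteq> V" and "B \<subseteq> V"
    and "A \<noteq> {}" and "B \<noteq> {}"
    and "\<forall>a\<in>A. \<forall>a'\<in>A. k_equiv V E ends k a a'"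
    and "\<forall>b\<in>B. \<forall>b'\<in>B. k_equiv V E ends k b b'"
    and "\<forall>a\<in>A. \<forall>b\<in>B. \<not> k_equiv V E ends k a b"
  shows "\<exists>X. X \<subseteq> E \<and> card X \<le> k - 1 \<and> \<not> has_AB_path V (E - X) ends A B"
proof -
  interpret mg V E ends by unfold_locales (rule assms(1))
  obtain a where a: "a \<in> A" using assms(5) by blast
  obtain b where b: "b \<in> B" using assms(6) by blast
  have nab: "\<not> k_equiv V E ends k a b" using assms(9) a b by blast
  then have ab: "a \<noteq> b" unfolding k_equiv_def by blast
  have aV: "a \<in> V" using a assms(3) by blast
  have "(\<exists>F. flow a b F k) \<or> (\<exists>X \<subseteq> E. card X \<le> k - 1 \<and> \<not> (uconn (E - X))\<^sup>*\<^sup>* a b)"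
    using flow_or_cut[OF ab, of k k] by simp
  then show ?thesis
  proof
    assume "\<exists>F. flow a b F k"
    then obtain F where "flow a b F k" by blast
    from flow_paths[OF aV ab this] obtain P :: "nat \<Rightarrow> 'v list \<times> 'e list" where
      "\<forall>i<k. is_uv_path V E ends a b (fst (P i)) (snd (P i)) \<and> set (snd (P i)) \<subseteq> fst ` F"
      "\<forall>i<k. \<forall>i'<k. i \<noteq> i' \<longrightarrow> set (snd (P i)) \<inter> set (snd (P i')) = {}"
      by blast
    then have "k_equiv V E ends k a b" unfolding k_equiv_def by blast
    with nab show ?thesis by blast
  next
    assume "\<exists>X \<subseteq> E. card X \<le> k - 1 \<and> \<not> (uconn (E - X))\<^sup>*\<^sup>* a b"
    then obtain X where X: "X \<subseteq> E" "card X \<le> k - 1" "\<not> (uconn (E - X))\<^sup>*\<^sup>* a b" by blast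
    have "\<not> has_AB_path V (E - X) ends A B"
    proof
      assume "has_AB_path V (E - X) ends A B"
      then obtain a' b' vs es where a': "a' \<in> A" and b': "b' \<in> B"
        and p: "is_uv_path V (E - X) ends a' b' vs es" unfolding has_AB_path_def by blast
      have c1: "(uconn (E - X))\<^sup>*\<^sup>* a a'"
        using equiv_conn[OF _ assms(2) X(1,2)] assms(7) a a' by blast
      have c2: "(uconn (E - X))\<^sup>*\<^sup>* a' b'" using path_conn[OF p] .
      have c3: "(uconn (E - X))\<^sup>*\<^sup>* b' b"
        using equiv_conn[OF _ assms(2) X(1,2)] assms(8) b b' by blast
      from c1 c2 c3 have "(uconn (E - X))\<^sup>*\<^sup>* a b" by (meson rtranclp_trans)
      with X(3) show False by blast
    qed
    with X(1,2) show ?thesis by blast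
  qed
qed

end
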